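(* Let $c\in\mathbb{R}[t]$ be a polynomial of degree one, let $P,D\in\mathbb{H}[t]$ with $P\neq 0$, and let $M=c^2P+\varepsilon D\in\mathbb{DH}[t]$ be reduced, i.e. there is no $r\in\mathbb{R}[t]$ of positive degree and $M'\in\mathbb{DH}[t]$ with $M=rM'$. Then $M$ cannot be written as a product of polynomials of degree one in $\mathbb{DH}[t]$.
   Context: $\mathbb{D}=\mathbb{R}[\varepsilon]/\langle\varepsilon^2\rangle$ denotes the dual numbers. $\mathbb{H}$ denotes the real quaternions with basis $1,\mathbf{i},\mathbf{j},\mathbf{k}$, $\mathbf{i}^2=\mathbf{j}^2=\mathbf{k}^2=\mathbf{i}\mathbf{j}\mathbf{k}=-1$. The dual quaternions $\mathbb{DH}$ are $\mathbb{H}\otimes_{\mathbb{R}}\mathbb{D}$ ($\varepsilon$ central, $\varepsilon^2=0$). $\mathbb{DH}[t]$ is the polynomial ring with dual quaternion coefficients in which $t$ commutes with all coefficients; every element is $P+\varepsilon D$ with $P,D\in\mathbb{H}[t]$ (primal and dual part). *)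

theory Defs
  imports "HOL-Computational_Algebra.Polynomial"
begin

text \<open>Quaternion a + b i + c j + d k with i^2 = j^2 = k^2 = ijk = -1.\<close>

datatype quat = Quat (Re_q: real) (Im1: real) (Im2: real) (Im3: real)

instantiation quat :: comm_monoid_add
begin
definition zero_quat_def: "0 = Quat 0 0 0 0"
definition plus_quat_def:
  "x + y = Quat (Re_q x + Re_q y) (Im1 x + Im1 y) (Im2 x + Im2 y) (Im3 x + Im3 y)"
instance
  by standard (simp_all add: zero_quat_def plus_quat_def algebra_simps)
end

instantiation quat :: "{times, one}"
begin
definition one_quat_def: "1 = Quat 1 0 0 0"
definition times_quat_def:
  "x * y = Quat
     (Re_q x * Re_q y - Im1 x * Im1 y - Im2 x * Im2 y - Im3 x * Im3 y)
     (Re_q x * Im1 y + Im1 x * Re_q y + Im2 x * Im3 y - Im3 x * Im2 y)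
     (Re_q x * Im2 y - Im1 x * Im3 y + Im2 x * Re_q y + Im3 x * Im1 y)
     (Re_q x * Im3 y + Im1 x * Im2 y - Im2 x * Im1 y + Im3 x * Re_q y)"
instance ..
end

definition quat_of_real :: "real \<Rightarrow> quat" where
  "quat_of_real r = Quat r 0 0 0"

text \<open>The library multiplication on polynomials requires a commutative coefficient
  ring, so we define the (non-commutative) Cauchy product explicitly.\<close>

definition qpmult :: "quat poly \<Rightarrow> quat poly \<Rightarrow> quat poly" where
  "qpmult p q = (\<Sum>i\<le>degree p. \<Sum>j\<le>degree q. monom (coeff p i * coeff q j) (i + j))"

text \<open>An element P + eps D of DH[t] is represented by the pair (P, D) of its primal and
  dual part, P, D in H[t].\<close>

type_synonym dqpoly = "quat poly \<times> quat poly"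

definition dqmult :: "dqpoly \<Rightarrow> dqpoly \<Rightarrow> dqpoly" where
  "dqmult M N = (qpmult (fst M) (fst N), qpmult (fst M) (snd N) + qpmult (snd M) (fst N))"

definition dqone :: dqpoly where
  "dqone = ([:1:], 0)"

definition dqprod :: "dqpoly list \<Rightarrow> dqpoly" where
  "dqprod Fs = foldr dqmult Fs dqone"

definition dqdegree :: "dqpoly \<Rightarrow> nat" where
  "dqdegree M = max (degree (fst M)) (degree (snd M))"

definition qpoly_of_real :: "real poly \<Rightarrow> quat poly" where
  "qpoly_of_real r = map_poly quat_of_real r"

definition dq_of_real :: "real poly \<Rightarrow> dqpoly" where
  "dq_of_real r = (qpoly_of_real r, 0)"

text \<open>M is reduced: no real polynomial of positive degree is a (left) factor.
  Real polynomials are central, so left/right makes no difference.\<close>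
definition dq_reduced :: "dqpoly \<Rightarrow> bool" where
  "dq_reduced M \<longleftrightarrow> \<not> (\<exists>r M'. degree r > 0 \<and> M = dqmult (dq_of_real r) M')"

end

theory Submission
  imports Defs
begin

lemma Re_q_zero[simp]: "Re_q 0 = 0" "Im1 0 = 0" "Im2 0 = 0" "Im3 0 = 0"
  by (simp_all add: zero_quat_def)

lemma quat_plus_comps[simp]:
  "Re_q (a + b) = Re_q a + Re_q b" "Im1 (a + b) = Im1 a + Im1 b"
  "Im2 (a + b) = Im2 a + Im2 b" "Im3 (a + b) = Im3 a + Im3 b"
  by (simp_all add: plus_quat_def)

lemma quat_sum_comps:
  "Re_q (sum f S) = (\<Sum>i\<in>S. Re_q (f i))" "Im1 (sum f S) = (\<Sum>i\<in>S. Im1 (f i))"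
  "Im2 (sum f S) = (\<Sum>i\<in>S. Im2 (f i))" "Im3 (sum f S) = (\<Sum>i\<in>S. Im3 (f i))"
  by (induction S rule: infinite_finite_induct, simp_all)+

definition C0 :: "quat poly \<Rightarrow> real poly" where "C0 p = map_poly Re_q p"
definition C1 :: "quat poly \<Rightarrow> real poly" where "C1 p = map_poly Im1 p"
definition C2 :: "quat poly \<Rightarrow> real poly" where "C2 p = map_poly Im2 p"
definition C3 :: "quat poly \<Rightarrow> real poly" where "C3 p = map_poly Im3 p"

lemma coeff_C[simp]:
  "coeff (C0 p) n = Re_q (coeff p n)" "coeff (C1 p) n = Im1 (coeff p n)"
  "coeff (C2 p) n = Im2 (coeff p n)" "coeff (C3 p) n = Im3 (coeff p n)"
  by (simp_all add: C0_def C1_def C2_def C3_def coeff_map_poly)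

lemma degree_C:
  "degree (C0 p) \<le> degree p" "degree (C1 p) \<le> degree p"
  "degree (C2 p) \<le> degree p" "degree (C3 p) \<le> degree p"
  by (auto intro!: degree_le simp: coeff_eq_0)

lemma quat_poly_eqI:
  assumes "C0 p = C0 q" "C1 p = C1 q" "C2 p = C2 q" "C3 p = C3 q"
  shows "p = q"
proof (rule poly_eqI)
  fix n
  have "Re_q (coeff p n) = Re_q (coeff q n)" "Im1 (coeff p n) = Im1 (coeff q n)"
       "Im2 (coeff p n) = Im2 (coeff q n)" "Im3 (coeff p n) = Im3 (coeff q n)"
    using assms by (metis coeff_C)+
  then show "coeff p n = coeff q n" by (simp add: quat.expand)
qed

lemma C_sum:
  "C0 (sum f S) = (\<Sum>i\<in>S. C0 (f i))" "C1 (sum f S) = (\<Sum>i\<in>S. C1 (f i))"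
  "C2 (sum f S) = (\<Sum>i\<in>S. C2 (f i))" "C3 (sum f S) = (\<Sum>i\<in>S. C3 (f i))"
  by (rule poly_eqI; simp add: coeff_sum quat_sum_comps)+

lemma C_monom[simp]:
  "C0 (monom a n) = monom (Re_q a) n" "C1 (monom a n) = monom (Im1 a) n"
  "C2 (monom a n) = monom (Im2 a) n" "C3 (monom a n) = monom (Im3 a) n"
  by (rule poly_eqI; simp add: coeff_monom)+

lemma C_add[simp]:
  "C0 (p + q) = C0 p + C0 q" "C1 (p + q) = C1 p + C1 q"
  "C2 (p + q) = C2 p + C2 q" "C3 (p + q) = C3 p + C3 q"
  by (rule poly_eqI; simp)+

lemma C_zero[simp]: "C0 0 = 0" "C1 0 = 0" "C2 0 = 0" "C3 0 = 0"
  by (rule poly_eqI; simp)+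

lemma real_mult_expand:
  fixes p q :: "real poly"
  assumes "degree p \<le> N" "degree q \<le> M"
  shows "p * q = (\<Sum>i\<le>N. \<Sum>j\<le>M. monom (coeff p i * coeff q j) (i+j))"
proof -
  have "p * q = (\<Sum>i\<le>N. monom (coeff p i) i) * (\<Sum>j\<le>M. monom (coeff q j) j)"
    using poly_as_sum_of_monoms'[OF assms(1)] poly_as_sum_of_monoms'[OF assms(2)] by simp
  also have "\<dots> = (\<Sum>i\<le>N. \<Sum>j\<le>M. monom (coeff p i * coeff q j) (i+j))"
    by (simp add: sum_product mult_monom)
  finally show ?thesis .
qed

lemma C_qpmult:
  "C0 (qpmult p q) = C0 p * C0 q - C1 p * C1 q - C2 p * C2 q - C3 p * C3 q"
  "C1 (qpmult p q) = C0 p * C1 q + C1 p * C0 q + C2 p * C3 q - C3 p * C2 q"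
  "C2 (qpmult p q) = C0 p * C2 q - C1 p * C3 q + C2 p * C0 q + C3 p * C1 q"
  "C3 (qpmult p q) = C0 p * C3 q + C1 p * C2 q - C2 p * C1 q + C3 p * C0 q"
  by (simp_all add: qpmult_def C_sum times_quat_def
      real_mult_expand[of "C0 p" "degree p" _ "degree q"]
      real_mult_expand[of "C1 p" "degree p" _ "degree q"]
      real_mult_expand[of "C2 p" "degree p" _ "degree q"]
      real_mult_expand[of "C3 p" "degree p" _ "degree q"]
      degree_C sum_subtractf sum.distrib add_monom[symmetric] diff_monom[symmetric])

definition qev :: "quat poly \<Rightarrow> real \<Rightarrow> quat" where
  "qev p x = Quat (poly (C0 p) x) (poly (C1 p) x) (poly (C2 p) x) (poly (C3 p) x)"
definition qd :: "quat poly \<Rightarrow> real \<Rightarrow> quat" where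
  "qd p x = Quat (poly (pderiv (C0 p)) x) (poly (pderiv (C1 p)) x)
     (poly (pderiv (C2 p)) x) (poly (pderiv (C3 p)) x)"

lemma qev_mult: "qev (qpmult p q) x = qev p x * qev q x"
  by (simp add: qev_def C_qpmult times_quat_def)

lemma qd_mult: "qd (qpmult p q) x = qd p x * qev q x + qev p x * qd q x"
  by (simp add: qev_def qd_def C_qpmult times_quat_def plus_quat_def pderiv_mult pderiv_diff pderiv_add algebra_simps)

lemma qev_add: "qev (p + q) x = qev p x + qev q x"
  by (simp add: qev_def plus_quat_def)

lemma C_one[simp]: "C0 [:1:] = 1" "C1 [:1:] = 0" "C2 [:1:] = 0" "C3 [:1:] = 0"
  by (rule poly_eqI; simp add: one_quat_def coeff_pCons split: nat.splits)+

lemma qev_one: "qev [:1:] x = 1"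
proof -
  have "qev [:1:] x = Quat 1 0 0 0" by (simp add: qev_def)
  thus ?thesis by (simp add: one_quat_def)
qed
lemma qd_one: "qd [:1:] x = 0"
proof -
  have "qd [:1:] x = Quat 0 0 0 0" by (simp add: qd_def)
  thus ?thesis by (simp add: zero_quat_def)
qed
lemma qev_zero: "qev 0 x = 0"
  by (simp add: qev_def zero_quat_def)

lemma C_qreal[simp]:
  "C0 (qpoly_of_real r) = r" "C1 (qpoly_of_real r) = 0"
  "C2 (qpoly_of_real r) = 0" "C3 (qpoly_of_real r) = 0"
  by (rule poly_eqI; simp add: qpoly_of_real_def coeff_map_poly quat_of_real_def zero_quat_def)+

lemma quat_mult_zero[simp]: "(0::quat) * a = 0" "a * (0::quat) = 0"
  by (simp_all add: times_quat_def zero_quat_def)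

lemma quat_add_zero[simp]: "(0::quat) + a = a" "a + (0::quat) = a"
  by simp_all

lemma quat_no_zero_div:
  assumes "(a::quat) * b = 0" "a \<noteq> 0" shows "b = 0"
proof -
  obtain a0 a1 a2 a3 where a: "a = Quat a0 a1 a2 a3" by (cases a)
  obtain b0 b1 b2 b3 where b: "b = Quat b0 b1 b2 b3" by (cases b)
  define N where "N = a0^2 + a1^2 + a2^2 + a3^2"
  have N: "N > 0" using assms(2) unfolding N_def a zero_quat_def
    by (smt (verit) sum_power2_eq_zero_iff power2_less_eq_zero_iff zero_le_power2)
  have e: "a0*b0 - a1*b1 - a2*b2 - a3*b3 = 0" "a0*b1 + a1*b0 + a2*b3 - a3*b2 = 0"
       "a0*b2 - a1*b3 + a2*b0 + a3*b1 = 0" "a0*b3 + a1*b2 - a2*b1 + a3*b0 = 0"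
    using assms(1) by (simp_all add: a b times_quat_def zero_quat_def)
  have "N * b0 = a0*(a0*b0 - a1*b1 - a2*b2 - a3*b3) + a1*(a0*b1 + a1*b0 + a2*b3 - a3*b2)
      + a2*(a0*b2 - a1*b3 + a2*b0 + a3*b1) + a3*(a0*b3 + a1*b2 - a2*b1 + a3*b0)"
    by (simp add: N_def power2_eq_square algebra_simps)
  hence 0: "b0 = 0" using e N by simp
  have "N * b1 = a0*(a0*b1 + a1*b0 + a2*b3 - a3*b2) - a1*(a0*b0 - a1*b1 - a2*b2 - a3*b3)
      - a2*(a0*b3 + a1*b2 - a2*b1 + a3*b0) + a3*(a0*b2 - a1*b3 + a2*b0 + a3*b1)"
    by (simp add: N_def power2_eq_square algebra_simps)
  hence 1: "b1 = 0" using e N by simp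
  have "N * b2 = a0*(a0*b2 - a1*b3 + a2*b0 + a3*b1) + a1*(a0*b3 + a1*b2 - a2*b1 + a3*b0)
      - a2*(a0*b0 - a1*b1 - a2*b2 - a3*b3) - a3*(a0*b1 + a1*b0 + a2*b3 - a3*b2)"
    by (simp add: N_def power2_eq_square algebra_simps)
  hence 2: "b2 = 0" using e N by simp
  have "N * b3 = a0*(a0*b3 + a1*b2 - a2*b1 + a3*b0) - a1*(a0*b2 - a1*b3 + a2*b0 + a3*b1)
      + a2*(a0*b1 + a1*b0 + a2*b3 - a3*b2) - a3*(a0*b0 - a1*b1 - a2*b2 - a3*b3)"
    by (simp add: N_def power2_eq_square algebra_simps)
  hence 3: "b3 = 0" using e N by simp
  show ?thesis using 0 1 2 3 by (simp add: b zero_quat_def)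
qed

lemma quat_one_nz: "(1::quat) \<noteq> 0"
  by (simp add: one_quat_def zero_quat_def)

lemma dqprod_Cons: "dqprod (F # Fs) = dqmult F (dqprod Fs)"
  by (simp add: dqprod_def)

lemma key:
  assumes "\<forall>F\<in>set Fs. qev (fst F) x = 0 \<longrightarrow> qd (fst F) x \<noteq> 0"
    and "qev (fst (dqprod Fs)) x = 0" and "qd (fst (dqprod Fs)) x = 0"
  shows "qev (snd (dqprod Fs)) x = 0"
  using assms
proof (induction Fs)
  case Nil
  then show ?case by (simp add: dqprod_def dqone_def qev_one quat_one_nz)
next
  case (Cons F Fs)
  define a where "a = qev (fst F) x"
  define b where "b = qev (snd F) x"
  define b' where "b' = qd (fst F) x"
  define p where "p = qev (fst (dqprod Fs)) x"
  define s where "s = qev (snd (dqprod Fs)) x"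
  define s' where "s' = qd (fst (dqprod Fs)) x"
  have h1: "a * p = 0" using Cons.prems(2)
    by (simp add: dqprod_Cons dqmult_def qev_mult a_def p_def)
  have h2: "b' * p + a * s' = 0" using Cons.prems(3)
    by (simp add: dqprod_Cons dqmult_def qd_mult a_def p_def b'_def s'_def)
  have goal: "qev (snd (dqprod (F # Fs))) x = a * s + b * p"
    by (simp add: dqprod_Cons dqmult_def qev_mult qev_add a_def p_def b_def s_def)
  show ?case
  proof (cases "a = 0")
    case True
    then have "b' \<noteq> 0" using Cons.prems(1) by (simp add: a_def b'_def)
    moreover have "b' * p = 0" using h2 True by simp
    ultimately have "p = 0" using quat_no_zero_div by blast
    then show ?thesis using goal True by simp
  next
    case False
    then have p0: "p = 0" using h1 quat_no_zero_div by blast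
    then have "a * s' = 0" using h2 by simp
    then have "s' = 0" using False quat_no_zero_div by blast
    then have "s = 0" using Cons.IH Cons.prems(1) p0 by (simp add: p_def s_def s'_def)
    then show ?thesis using goal p0 by simp
  qed
qed

lemma deg1_poly:
  fixes r :: "real poly"
  assumes "degree r \<le> 1"
  shows "poly r x = coeff r 0 + x * coeff r 1" "poly (pderiv r) x = coeff r 1"
proof -
  have r: "r = [:coeff r 0, coeff r 1:]"
    by (rule poly_eqI) (use assms in \<open>auto simp: coeff_pCons coeff_eq_0 split: nat.splits\<close>)
  show "poly r x = coeff r 0 + x * coeff r 1" by (subst r) simp
  show "poly (pderiv r) x = coeff r 1" by (subst r) (simp add: pderiv_pCons)
qed

lemma deg1_zero:
  fixes r :: "real poly"
  assumes "degree r \<le> 1" "poly r x = 0" "poly (pderiv r) x = 0"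
  shows "r = 0"
proof (rule poly_eqI)
  fix n
  have c1: "coeff r 1 = 0" using deg1_poly[OF assms(1)] assms by simp
  have c0: "coeff r 0 = 0" using deg1_poly[OF assms(1), of x] assms c1 by simp
  show "coeff r n = coeff 0 n"
    using c0 c1 assms(1) by (cases "n \<le> 1") (auto simp: coeff_eq_0 le_Suc_eq)
qed

lemma lin_qd:
  assumes "degree A \<le> 1" "A \<noteq> 0" "qev A x = 0"
  shows "qd A x \<noteq> 0"
proof
  assume h: "qd A x = 0"
  have d: "degree (C0 A) \<le> 1" "degree (C1 A) \<le> 1" "degree (C2 A) \<le> 1" "degree (C3 A) \<le> 1"
    using degree_C[of A] assms(1) by linarith+
  have "C0 A = 0" "C1 A = 0" "C2 A = 0" "C3 A = 0"
    using deg1_zero[OF d(1), of x] deg1_zero[OF d(2), of x] deg1_zero[OF d(3), of x]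
      deg1_zero[OF d(4), of x] h assms(3) by (simp_all add: qev_def qd_def zero_quat_def)
  then have "A = 0" by (intro quat_poly_eqI) simp_all
  then show False using assms(2) by simp
qed

lemma qpmult_zero: "qpmult 0 q = 0" "qpmult q 0 = 0"
  by (rule quat_poly_eqI; simp add: C_qpmult)+

lemma dqprod_zero:
  assumes "F \<in> set Fs" "fst F = 0"
  shows "fst (dqprod Fs) = 0"
  using assms by (induction Fs) (auto simp: dqprod_Cons dqmult_def qpmult_zero)

definition Q4 :: "real poly \<Rightarrow> real poly \<Rightarrow> real poly \<Rightarrow> real poly \<Rightarrow> quat poly" where
  "Q4 a b c d = map_poly (\<lambda>r. Quat r 0 0 0) a + map_poly (\<lambda>r. Quat 0 r 0 0) b
     + map_poly (\<lambda>r. Quat 0 0 r 0) c + map_poly (\<lambda>r. Quat 0 0 0 r) d"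

lemma C_Q4[simp]:
  "C0 (Q4 a b c d) = a" "C1 (Q4 a b c d) = b" "C2 (Q4 a b c d) = c" "C3 (Q4 a b c d) = d"
  by (rule poly_eqI; simp add: Q4_def coeff_map_poly zero_quat_def)+

lemma reduced_root:
  assumes "dq_reduced (qpmult (qpoly_of_real (c ^ 2)) P, D)" "poly c x = 0"
  shows "qev D x \<noteq> 0"
proof
  assume h: "qev D x = 0"
  define r where "r = [:-x, 1:]"
  have "poly (C0 D) x = 0" "poly (C1 D) x = 0" "poly (C2 D) x = 0" "poly (C3 D) x = 0"
    using h by (simp_all add: qev_def zero_quat_def)
  then have "r dvd C0 D" "r dvd C1 D" "r dvd C2 D" "r dvd C3 D" "r dvd c"
    using assms(2) by (simp_all add: r_def poly_eq_0_iff_dvd)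
  then obtain d0 d1 d2 d3 k where d: "C0 D = r * d0" "C1 D = r * d1" "C2 D = r * d2"
     "C3 D = r * d3" and ck: "c = r * k"
    by (metis dvdE)
  define M' where "M' = (Q4 (k*c*C0 P) (k*c*C1 P) (k*c*C2 P) (k*c*C3 P), Q4 d0 d1 d2 d3)"
  have "(qpmult (qpoly_of_real (c ^ 2)) P, D) = dqmult (dq_of_real r) M'"
    unfolding dqmult_def dq_of_real_def M'_def
    by (auto intro!: quat_poly_eqI simp: C_qpmult qpmult_zero d ck power2_eq_square algebra_simps)
  moreover have "degree r > 0" by (simp add: r_def)
  ultimately show False using assms(1) unfolding dq_reduced_def by blast
qed

theorem mainTheorem6:
  fixes c :: "real poly" and P D :: "quat poly"
  assumes "degree c = 1"
    and "P \<noteq> 0"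
    and "dq_reduced (qpmult (qpoly_of_real (c ^ 2)) P, D)"
  shows "\<not> (\<exists>Fs. (\<forall>F \<in> set Fs. dqdegree F = 1) \<and>
                 dqprod Fs = (qpmult (qpoly_of_real (c ^ 2)) P, D))"
proof
  assume "\<exists>Fs. (\<forall>F \<in> set Fs. dqdegree F = 1) \<and>
                 dqprod Fs = (qpmult (qpoly_of_real (c ^ 2)) P, D)"
  then obtain Fs where hF: "\<forall>F \<in> set Fs. dqdegree F = 1"
    and hp: "dqprod Fs = (qpmult (qpoly_of_real (c ^ 2)) P, D)" by blast
  define M where "M = qpmult (qpoly_of_real (c ^ 2)) P"
  have c1: "coeff c 1 \<noteq> 0" using assms(1) by (metis leading_coeff_0_iff one_neq_zero degree_0)
  define x where "x = - coeff c 0 / coeff c 1"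
  have cx: "poly c x = 0" using deg1_poly[of c x] assms(1) c1 by (simp add: x_def)
  have c0: "c \<noteq> 0" using assms(1) by auto
  have M0: "M \<noteq> 0"
  proof
    assume "M = 0"
    then have "c^2 * C0 P = 0" "c^2 * C1 P = 0" "c^2 * C2 P = 0" "c^2 * C3 P = 0"
      unfolding M_def by (metis C_qpmult C_qreal C_zero mult_zero_left diff_zero add_0_right add_0_left)+
    then have "P = 0" using c0 by (intro quat_poly_eqI) simp_all
    then show False using assms(2) by simp
  qed
  have Fprop: "\<forall>F\<in>set Fs. qev (fst F) x = 0 \<longrightarrow> qd (fst F) x \<noteq> 0"
  proof (intro ballI impI)
    fix F assume F: "F \<in> set Fs" "qev (fst F) x = 0"
    have "degree (fst F) \<le> 1" using hF F(1) by (auto simp: dqdegree_def)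
    moreover have "fst F \<noteq> 0" using dqprod_zero[OF F(1)] hp M0 M_def by auto
    ultimately show "qd (fst F) x \<noteq> 0" using lin_qd F(2) by blast
  qed
  have ev: "qev M x = 0"
    by (simp add: M_def qev_def C_qpmult cx zero_quat_def)
  have dv: "qd M x = 0"
    by (simp add: M_def qd_def C_qpmult cx zero_quat_def pderiv_mult pderiv_power power2_eq_square)
  have "qev D x = 0" using key[OF Fprop] ev dv hp M_def by simp
  then show False using reduced_root[OF assms(3) cx] by simp
qed

end
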